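(* In the setting of the context, $S^2=(q|_B)^{-1}$.
   Context: $k$ is a field; $C_R(S)=\{r\in R:rs=sr\ \forall s\in S\}$. $N\subseteq M$ is a strongly separable, irreducible extension of $k$-algebras: $C_M(N)=k1$ and there are an $N$-bimodule map $E:M\to N$ and $x_1,\dots,x_n,y_1,\dots,y_n\in M$ with $\sum_iE(mx_i)y_i=m=\sum_ix_iE(y_im)$ for all $m\in M$, $E(1)\neq0$, $\sum_ix_iy_i\neq0$; normalized so that $E(1)=1$, whence $\sum_ix_iy_i=\lambda^{-1}1$ with $0\neq\lambda\in k$. Basic construction: given $S\subseteq R$, an $S$-bimodule map $E_S:R\to S$ with $E_S(1)=1$ and $r_i,s_i\in R$ with $\sum_iE_S(rr_i)s_i=r=\sum_ir_iE_S(s_ir)$ and $\sum_ir_is_i=\lambda^{-1}1$, set $R_1=R\otimes_SR$ with product $(a\otimes b)(c\otimes d)=aE_S(bc)\otimes d$, unit $\sum_ir_i\otimes s_i$, $R\subseteq R_1$ via $r\mapsto\sum_irr_i\otimes s_i$, Jones idempotent $e=1\otimes1$, $E_R:R_1\to R$, $a\otimes b\mapsto\lambda ab$; then $E_R$, $\lambda^{-1}r_i\otimes1$, $1\otimes s_i$ satisfy the same conditions with the same $\lambda$. From $(N\subseteq M,E)$ get $M_1,e_1,E_M$; from $(M\subseteq M_1,E_M)$ get $M_2,e_2,E_{M_1}$. Let $A=C_{M_1}(N)$, $B=C_{M_2}(M)$, $C=C_{M_2}(N)$. Depth 2 is assumed: $M_1$ is free as right $M$-module with basis in $A$, $M_2$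 free as right $M_1$-module with basis in $B$. Let $F=E_M\circ E_{M_1}$; on $C$ it takes values in $k1\cong k$ and is faithful. $q:C\to C$ is the Nakayama automorphism of $F$: $F(q(c)c')=F(c'c)$ for all $c,c'\in C$; it maps $B$ onto $B$. The antipode $S:B\to B$ is the linear map defined by $E_{M_1}(be_1e_2)=E_{M_1}(e_2e_1S(b))$ for all $b\in B$ (well defined since $b\mapsto E_{M_1}(e_2e_1b)$ is a linear bijection $B\to A$). *)

theory Defs
  imports Complex_Main
begin

text \<open>All algebras of the tower N \<subseteq> M \<subseteq> M1 \<subseteq> M2 are realised as k-subalgebras
  of one ambient k-algebra (a ring with a k-scalar multiplication sc).\<close>

definition kalg :: "('k::field \<Rightarrow> 'a::ring_1 \<Rightarrow> 'a) \<Rightarrow> bool" where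
  "kalg sc \<longleftrightarrow> vector_space sc \<and>
     (\<forall>c x y. sc c (x * y) = sc c x * y \<and> sc c (x * y) = x * sc c y)"

definition subalg :: "('k::field \<Rightarrow> 'a::ring_1 \<Rightarrow> 'a) \<Rightarrow> 'a set \<Rightarrow> bool" where
  "subalg sc A \<longleftrightarrow> 1 \<in> A \<and> (\<forall>x\<in>A. \<forall>y\<in>A. x + y \<in> A \<and> x * y \<in> A)
     \<and> (\<forall>c. \<forall>x\<in>A. sc c x \<in> A)"

definition centralizer :: "'a::ring_1 set \<Rightarrow> 'a set \<Rightarrow> 'a set" where
  "centralizer R S = {r \<in> R. \<forall>s\<in>S. r * s = s * r}"

definition klinear_on :: "('k::field \<Rightarrow> 'a::ring_1 \<Rightarrow> 'a) \<Rightarrow> 'a set \<Rightarrow> ('a \<Rightarrow> 'a) \<Rightarrow> bool" where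
  "klinear_on sc A f \<longleftrightarrow> (\<forall>x\<in>A. \<forall>y\<in>A. f (x + y) = f x + f y) \<and>
     (\<forall>c. \<forall>x\<in>A. f (sc c x) = sc c (f x))"

definition bimod_map :: "('k::field \<Rightarrow> 'a::ring_1 \<Rightarrow> 'a) \<Rightarrow> 'a set \<Rightarrow> 'a set \<Rightarrow> ('a \<Rightarrow> 'a) \<Rightarrow> bool" where
  "bimod_map sc S R E \<longleftrightarrow> klinear_on sc R E \<and> (\<forall>r\<in>R. E r \<in> S) \<and>
     (\<forall>s\<in>S. \<forall>r\<in>R. E (s * r) = s * E r \<and> E (r * s) = E r * s)"

definition strongly_sep_data ::
  "('k::field \<Rightarrow> 'a::ring_1 \<Rightarrow> 'a) \<Rightarrow> 'a set \<Rightarrow> 'a set \<Rightarrow> ('a \<Rightarrow> 'a) \<Rightarrow> 'k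
    \<Rightarrow> nat \<Rightarrow> (nat \<Rightarrow> 'a) \<Rightarrow> (nat \<Rightarrow> 'a) \<Rightarrow> bool" where
  "strongly_sep_data sc S R E lam n x y \<longleftrightarrow>
     bimod_map sc S R E \<and> E 1 = 1 \<and> (\<forall>i<n. x i \<in> R \<and> y i \<in> R) \<and>
     (\<forall>m\<in>R. (\<Sum>i<n. E (m * x i) * y i) = m \<and> (\<Sum>i<n. x i * E (y i * m)) = m) \<and>
     lam \<noteq> 0 \<and> (\<Sum>i<n. x i * y i) = sc (inverse lam) 1"

text \<open>R1 (a subalgebra of the ambient algebra containing R), the Jones idempotent e and
  E_R : R1 \<rightarrow> R realise the basic construction R \<otimes>_S R of (S \<subseteq> R, E_S):
  the map a \<otimes> b \<mapsto> a e b is a well defined (s e = e s), multiplicative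
  (e r e = E_S(r) e), surjective (R1 is spanned by R e R) algebra map, and
  E_R(a e b) = lam a b (which forces injectivity).\<close>
definition basic_construction ::
  "('k::field \<Rightarrow> 'a::ring_1 \<Rightarrow> 'a) \<Rightarrow> 'a set \<Rightarrow> 'a set \<Rightarrow> ('a \<Rightarrow> 'a) \<Rightarrow> 'k
    \<Rightarrow> 'a set \<Rightarrow> 'a \<Rightarrow> ('a \<Rightarrow> 'a) \<Rightarrow> bool" where
  "basic_construction sc S R ES lam R1 e ER \<longleftrightarrow>
     subalg sc R1 \<and> R \<subseteq> R1 \<and> e \<in> R1 \<and>
     (\<forall>s\<in>S. s * e = e * s) \<and>
     (\<forall>r\<in>R. e * r * e = ES r * e) \<and>
     (\<forall>z\<in>R1. \<exists>(m::nat) a b. (\<forall>i<m. a i \<in> R \<and> b i \<in> R) \<and> z = (\<Sum>i<m. a i * e * b i)) \<and>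
     klinear_on sc R1 ER \<and>
     (\<forall>a\<in>R. \<forall>b\<in>R. ER (a * e * b) = sc lam (a * b))"

definition free_right_with_basis_in :: "'a::ring_1 set \<Rightarrow> 'a set \<Rightarrow> 'a set \<Rightarrow> bool" where
  "free_right_with_basis_in R Sub Bs \<longleftrightarrow>
     (\<exists>(m::nat) b. (\<forall>j<m. b j \<in> Bs) \<and>
        (\<forall>z\<in>R. \<exists>!c. (\<forall>j<m. c j \<in> Sub) \<and> (\<forall>j. m \<le> j \<longrightarrow> c j = 0) \<and>
                      z = (\<Sum>j<m. b j * c j)))"

end

theory Submission
  imports Defs
begin

lemma span_induct:
  fixes R D R1 :: "'a::ring_1 set"
  assumes span: "\<forall>z\<in>R1. \<exists>(m::nat) a b. (\<forall>i<m. a i \<in> R \<and> b i \<in> R) \<and> z = (\<Sum>i<m. a i * e * b i)"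
    and z: "z \<in> R1"
    and D0: "0 \<in> D" and Dgen: "\<And>a b. a \<in> R \<Longrightarrow> b \<in> R \<Longrightarrow> a * e * b \<in> D"
    and Dadd: "\<And>u v. u \<in> D \<Longrightarrow> v \<in> D \<Longrightarrow> u + v \<in> D"
    and P0: "P 0" and Pgen: "\<And>a b. a \<in> R \<Longrightarrow> b \<in> R \<Longrightarrow> P (a * e * b)"
    and Padd: "\<And>u v. u \<in> D \<Longrightarrow> v \<in> D \<Longrightarrow> P u \<Longrightarrow> P v \<Longrightarrow> P (u + v)"
  shows "P z"
proof -
  obtain m :: nat and a b where ab: "\<forall>i<m. a i \<in> R \<and> b i \<in> R" and zeq: "z = (\<Sum>i<m. a i * e * b i)"
    using bspec[OF span z] by blast
  have "\<forall>k\<le>m. (\<Sum>i<k. a i * e * b i) \<in> D \<and> P (\<Sum>i<k. a i * e * b i)"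
  proof (intro allI impI)
    fix k assume "k \<le> m"
    then show "(\<Sum>i<k. a i * e * b i) \<in> D \<and> P (\<Sum>i<k. a i * e * b i)"
    proof (induction k)
      case 0 then show ?case using D0 P0 by simp
    next
      case (Suc k)
      then have h: "(\<Sum>i<k. a i * e * b i) \<in> D \<and> P (\<Sum>i<k. a i * e * b i)" by simp
      have g: "a k * e * b k \<in> D" "P (a k * e * b k)" using ab Suc.prems Dgen Pgen by auto
      show ?case using h g Dadd Padd by simp
    qed
  qed
  then show ?thesis using zeq by simp
qed

locale P4ctx =
  fixes sc :: "'k::field \<Rightarrow> 'a::ring_1 \<Rightarrow> 'a"
    and N M M1 M2 :: "'a set"
    and E EM EM1 q S :: "'a \<Rightarrow> 'a"
    and lam :: 'k and n :: nat and x y :: "nat \<Rightarrow> 'a" and e1 e2 :: 'a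
  assumes alg: "kalg sc"
    and subM: "subalg sc M" and NM: "N \<subseteq> M"
    and sep: "strongly_sep_data sc N M E lam n x y"
    and bc1: "basic_construction sc N M E lam M1 e1 EM"
    and bc2: "basic_construction sc M M1 EM lam M2 e2 EM1"
    and Ffaith: "\<forall>c\<in>centralizer M2 N.
                   (\<forall>c'\<in>centralizer M2 N. EM (EM1 (c * c')) = 0) \<longrightarrow> c = 0"
    and qC: "\<forall>c\<in>centralizer M2 N. q c \<in> centralizer M2 N"
    and qnak: "\<forall>c\<in>centralizer M2 N. \<forall>c'\<in>centralizer M2 N.
                 EM (EM1 (q c * c')) = EM (EM1 (c' * c))"
    and SB: "\<forall>b\<in>centralizer M2 M. S b \<in> centralizer M2 M"
    and Sdef: "\<forall>b\<in>centralizer M2 M. EM1 (b * e1 * e2) = EM1 (e2 * e1 * S b)"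
begin

sublocale vs: vector_space sc using alg unfolding kalg_def by blast

lemma scL[simp]: "sc c u * v = sc c (u * v)" using alg unfolding kalg_def by metis
lemma scR[simp]: "u * sc c v = sc c (u * v)" using alg unfolding kalg_def by metis

lemma subM1: "subalg sc M1" and MM1: "M \<subseteq> M1" and e1M1: "e1 \<in> M1"
  and e1c: "\<And>s. s \<in> N \<Longrightarrow> s * e1 = e1 * s"
  and e1e: "\<And>r. r \<in> M \<Longrightarrow> e1 * r * e1 = E r * e1"
  and span1: "\<forall>z\<in>M1. \<exists>(m::nat) a b. (\<forall>i<m. a i \<in> M \<and> b i \<in> M) \<and> z = (\<Sum>i<m. a i * e1 * b i)"
  and EMlin: "klinear_on sc M1 EM"
  and EMgen0: "\<And>a b. a \<in> M \<Longrightarrow> b \<in> M \<Longrightarrow> EM (a * e1 * b) = sc lam (a * b)"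
  using bc1 unfolding basic_construction_def by auto

lemma subM2: "subalg sc M2" and M1M2: "M1 \<subseteq> M2" and e2M2: "e2 \<in> M2"
  and e2c: "\<And>s. s \<in> M \<Longrightarrow> s * e2 = e2 * s"
  and e2e: "\<And>r. r \<in> M1 \<Longrightarrow> e2 * r * e2 = EM r * e2"
  and span2: "\<forall>z\<in>M2. \<exists>(m::nat) a b. (\<forall>i<m. a i \<in> M1 \<and> b i \<in> M1) \<and> z = (\<Sum>i<m. a i * e2 * b i)"
  and EM1lin: "klinear_on sc M2 EM1"
  and EM1gen0: "\<And>a b. a \<in> M1 \<Longrightarrow> b \<in> M1 \<Longrightarrow> EM1 (a * e2 * b) = sc lam (a * b)"
  using bc2 unfolding basic_construction_def by auto

lemma Ebm: "bimod_map sc N M E" and xyM: "\<And>i. i < n \<Longrightarrow> x i \<in> M \<and> y i \<in> M"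
  and qb1: "\<And>m. m \<in> M \<Longrightarrow> (\<Sum>i<n. E (m * x i) * y i) = m"
  and qb2: "\<And>m. m \<in> M \<Longrightarrow> (\<Sum>i<n. x i * E (y i * m)) = m"
  and lam0: "lam \<noteq> 0"
  using sep unfolding strongly_sep_data_def by auto

lemma EN: "m \<in> M \<Longrightarrow> E m \<in> N" using Ebm unfolding bimod_map_def by auto

lemma sub_props:
  assumes "subalg sc A"
  shows "1 \<in> A" "u \<in> A \<Longrightarrow> v \<in> A \<Longrightarrow> u + v \<in> A" "u \<in> A \<Longrightarrow> v \<in> A \<Longrightarrow> u * v \<in> A"
    "u \<in> A \<Longrightarrow> sc c u \<in> A" "0 \<in> A" "u \<in> A \<Longrightarrow> - u \<in> A" "u \<in> A \<Longrightarrow> v \<in> A \<Longrightarrow> u - v \<in> A"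
proof -
  show "1 \<in> A" "u \<in> A \<Longrightarrow> v \<in> A \<Longrightarrow> u + v \<in> A" "u \<in> A \<Longrightarrow> v \<in> A \<Longrightarrow> u * v \<in> A"
    "u \<in> A \<Longrightarrow> sc c u \<in> A" using assms unfolding subalg_def by auto
  have "sc 0 1 \<in> A" using assms unfolding subalg_def by blast
  then show "0 \<in> A" by simp
  have n: "- u \<in> A" if "u \<in> A" for u
  proof -
    have "sc (-1) u \<in> A" using assms that unfolding subalg_def by blast
    then show ?thesis by (simp add: vs.scale_minus_left)
  qed
  show "u \<in> A \<Longrightarrow> - u \<in> A" using n by blast
  show "u \<in> A \<Longrightarrow> v \<in> A \<Longrightarrow> u - v \<in> A"
    using n[of v] assms unfolding subalg_def by (metis diff_conv_add_uminus)
qed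

lemmas M_cl = sub_props[OF subM]
lemmas M1_cl = sub_props[OF subM1]
lemmas M2_cl = sub_props[OF subM2]

lemma MM2: "M \<subseteq> M2" using MM1 M1M2 by blast
lemma e1M2: "e1 \<in> M2" using e1M1 M1M2 by blast
lemma NM1: "N \<subseteq> M1" using NM MM1 by blast
lemma NM2: "N \<subseteq> M2" using NM MM2 by blast

lemma EM_add: "u \<in> M1 \<Longrightarrow> v \<in> M1 \<Longrightarrow> EM (u + v) = EM u + EM v"
  using EMlin unfolding klinear_on_def by blast
lemma EM_sc: "u \<in> M1 \<Longrightarrow> EM (sc c u) = sc c (EM u)"
  using EMlin unfolding klinear_on_def by blast
lemma EM_0[simp]: "EM 0 = 0"
proof -
  have "EM (0 + 0) = EM 0 + EM 0" using EM_add M1_cl(5) by blast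
  then show ?thesis by simp
qed
lemma EM1_add: "u \<in> M2 \<Longrightarrow> v \<in> M2 \<Longrightarrow> EM1 (u + v) = EM1 u + EM1 v"
  using EM1lin unfolding klinear_on_def by blast
lemma EM1_sc: "u \<in> M2 \<Longrightarrow> EM1 (sc c u) = sc c (EM1 u)"
  using EM1lin unfolding klinear_on_def by blast
lemma EM1_0[simp]: "EM1 0 = 0"
proof -
  have "EM1 (0 + 0) = EM1 0 + EM1 0" using EM1_add M2_cl(5) by blast
  then show ?thesis by simp
qed

lemma gen1: "a \<in> M \<Longrightarrow> b \<in> M \<Longrightarrow> a * e1 * b \<in> M1"
  using MM1 e1M1 M1_cl(3) by blast
lemma gen2: "a \<in> M1 \<Longrightarrow> b \<in> M1 \<Longrightarrow> a * e2 * b \<in> M2"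
  using M1M2 e2M2 M2_cl(3) by blast

lemma induct1:
  assumes "z \<in> M1" "P 0" "\<And>a b. a \<in> M \<Longrightarrow> b \<in> M \<Longrightarrow> P (a * e1 * b)"
    "\<And>u v. u \<in> M1 \<Longrightarrow> v \<in> M1 \<Longrightarrow> P u \<Longrightarrow> P v \<Longrightarrow> P (u + v)"
  shows "P z"
  by (rule span_induct[OF span1 assms(1), where D=M1])
     (use assms M1_cl gen1 in auto)

lemma induct2:
  assumes "z \<in> M2" "P 0" "\<And>a b. a \<in> M1 \<Longrightarrow> b \<in> M1 \<Longrightarrow> P (a * e2 * b)"
    "\<And>u v. u \<in> M2 \<Longrightarrow> v \<in> M2 \<Longrightarrow> P u \<Longrightarrow> P v \<Longrightarrow> P (u + v)"
  shows "P z"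
  by (rule span_induct[OF span2 assms(1), where D=M2])
     (use assms M2_cl gen2 in auto)

lemma EM_gen: "a \<in> M \<Longrightarrow> b \<in> M \<Longrightarrow> EM (a * e1 * b) = sc lam (a * b)" by (rule EMgen0)
lemma EM1_gen: "a \<in> M1 \<Longrightarrow> b \<in> M1 \<Longrightarrow> EM1 (a * e2 * b) = sc lam (a * b)" by (rule EM1gen0)

lemma EM_gen': "a \<in> M \<Longrightarrow> b \<in> M \<Longrightarrow> EM (a * (e1 * b)) = sc lam (a * b)"
  using EM_gen by (simp add: mult.assoc)
lemma EM1_gen': "a \<in> M1 \<Longrightarrow> b \<in> M1 \<Longrightarrow> EM1 (a * (e2 * b)) = sc lam (a * b)"
  using EM1_gen by (simp add: mult.assoc)

lemma EM_M: assumes "z \<in> M1" shows "EM z \<in> M"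
  by (rule induct1[OF assms, where P="\<lambda>z. EM z \<in> M"]) (auto simp: EM_gen EM_add M_cl)
lemma EM1_M1: assumes "z \<in> M2" shows "EM1 z \<in> M1"
  by (rule induct2[OF assms, where P="\<lambda>z. EM1 z \<in> M1"]) (auto simp: EM1_gen EM1_add M1_cl)

lemma EM_left: assumes m: "m \<in> M" and z: "z \<in> M1" shows "EM (m * z) = m * EM z"
proof (rule induct1[OF z, where P="\<lambda>z. EM (m * z) = m * EM z"])
  fix a b assume ab: "a \<in> M" "b \<in> M"
  have "m * (a * e1 * b) = (m * a) * e1 * b" by (simp add: mult.assoc)
  then show "EM (m * (a * e1 * b)) = m * EM (a * e1 * b)" using ab m EM_gen'[of "m*a" b] by (simp add: EM_gen' M_cl mult.assoc)
next
  fix u v assume "u \<in> M1" "v \<in> M1" "EM (m * u) = m * EM u" "EM (m * v) = m * EM v"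
  then show "EM (m * (u + v)) = m * EM (u + v)" using m MM1 M1_cl by (simp add: distrib_left EM_add subset_iff)
qed simp

lemma EM_right: assumes m: "m \<in> M" and z: "z \<in> M1" shows "EM (z * m) = EM z * m"
proof (rule induct1[OF z, where P="\<lambda>z. EM (z * m) = EM z * m"])
  fix a b assume ab: "a \<in> M" "b \<in> M"
  have "(a * e1 * b) * m = a * e1 * (b * m)" by (simp add: mult.assoc)
  then show "EM ((a * e1 * b) * m) = EM (a * e1 * b) * m" using ab m by (simp add: EM_gen' M_cl mult.assoc)
next
  fix u v assume "u \<in> M1" "v \<in> M1" "EM (u * m) = EM u * m" "EM (v * m) = EM v * m"
  then show "EM ((u + v) * m) = EM (u + v) * m" using m MM1 M1_cl by (simp add: distrib_right EM_add subset_iff)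
qed simp

lemma EM1_left: assumes m: "m \<in> M1" and z: "z \<in> M2" shows "EM1 (m * z) = m * EM1 z"
proof (rule induct2[OF z, where P="\<lambda>z. EM1 (m * z) = m * EM1 z"])
  fix a b assume ab: "a \<in> M1" "b \<in> M1"
  have "m * (a * e2 * b) = (m * a) * e2 * b" by (simp add: mult.assoc)
  then show "EM1 (m * (a * e2 * b)) = m * EM1 (a * e2 * b)" using ab m EM1_gen'[of "m*a" b] by (simp add: EM1_gen' M1_cl mult.assoc)
next
  fix u v assume "u \<in> M2" "v \<in> M2" "EM1 (m * u) = m * EM1 u" "EM1 (m * v) = m * EM1 v"
  then show "EM1 (m * (u + v)) = m * EM1 (u + v)" using m M1M2 M2_cl by (simp add: distrib_left EM1_add subset_iff)
qed simp

lemma EM1_right: assumes m: "m \<in> M1" and z: "z \<in> M2" shows "EM1 (z * m) = EM1 z * m"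
proof (rule induct2[OF z, where P="\<lambda>z. EM1 (z * m) = EM1 z * m"])
  fix a b assume ab: "a \<in> M1" "b \<in> M1"
  have "(a * e2 * b) * m = a * e2 * (b * m)" by (simp add: mult.assoc)
  then show "EM1 ((a * e2 * b) * m) = EM1 (a * e2 * b) * m" using ab m by (simp add: EM1_gen' M1_cl mult.assoc)
next
  fix u v assume "u \<in> M2" "v \<in> M2" "EM1 (u * m) = EM1 u * m" "EM1 (v * m) = EM1 v * m"
  then show "EM1 ((u + v) * m) = EM1 (u + v) * m" using m M1M2 M2_cl by (simp add: distrib_right EM1_add subset_iff)
qed simp

abbreviation G where "G z \<equiv> EM (EM1 z)"

lemma G_add: "u \<in> M2 \<Longrightarrow> v \<in> M2 \<Longrightarrow> G (u + v) = G u + G v"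
  by (simp add: EM1_add EM_add EM1_M1)
lemma G_diff: "u \<in> M2 \<Longrightarrow> v \<in> M2 \<Longrightarrow> G (u - v) = G u - G v"
proof -
  assume a: "u \<in> M2" "v \<in> M2"
  have "G u = G ((u - v) + v)" by simp
  also have "\<dots> = G (u - v) + G v" using a M2_cl G_add[of "u-v" v] by simp
  finally show ?thesis by (simp add: algebra_simps)
qed
lemma G_left: "m \<in> M \<Longrightarrow> z \<in> M2 \<Longrightarrow> G (m * z) = m * G z"
  using MM1 by (simp add: EM1_left EM_left EM1_M1 subset_iff)
lemma G_right: "m \<in> M \<Longrightarrow> z \<in> M2 \<Longrightarrow> G (z * m) = G z * m"
  using MM1 by (simp add: EM1_right EM_right EM1_M1 subset_iff)
lemma G_sc: "z \<in> M2 \<Longrightarrow> G (sc c z) = sc c (G z)"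
  by (simp add: EM1_sc EM_sc EM1_M1)

lemma e1M1': "e1 * a \<in> M1" if "a \<in> M1" for a using that e1M1 M1_cl(3) by blast

lemma swapL: assumes z: "z \<in> M2" shows "G (e1 * z * e1 * e2) = G (e2 * e1 * z * e1)"
proof (rule induct2[OF z, where P="\<lambda>z. G (e1 * z * e1 * e2) = G (e2 * e1 * z * e1)"])
  show "G (e1 * 0 * e1 * e2) = G (e2 * e1 * 0 * e1)" by simp
next
  fix a b assume ab: "a \<in> M1" "b \<in> M1"
  have be1: "b * e1 \<in> M1" using ab e1M1 M1_cl(3) by blast
  have ea: "e1 * a \<in> M1" using ab e1M1 M1_cl(3) by blast
  have EMbe: "EM (b * e1) \<in> M" using be1 EM_M by blast
  have EMea: "EM (e1 * a) \<in> M" using ea EM_M by blast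
  have X: "e1 * a * EM (b * e1) \<in> M1" using ea EMbe MM1 M1_cl(3) by blast
  have "e1 * (a * e2 * b) * e1 * e2 = e1 * a * (e2 * (b * e1) * e2)" by (simp add: mult.assoc)
  also have "\<dots> = (e1 * a * EM (b * e1)) * e2 * 1" using e2e[OF be1] by (simp add: mult.assoc)
  finally have 1: "G (e1 * (a * e2 * b) * e1 * e2) = G ((e1 * a * EM (b * e1)) * e2 * 1)" by simp
  also have "\<dots> = EM (sc lam (e1 * a * EM (b * e1)))" using EM1_gen[OF X M1_cl(1)] by simp
  also have "\<dots> = sc lam (EM (e1 * a) * EM (b * e1))" using X EM_sc EM_right[OF EMbe ea] by simp
  finally have L: "G (e1 * (a * e2 * b) * e1 * e2) = sc lam (EM (e1 * a) * EM (b * e1))" .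
  have "e2 * e1 * (a * e2 * b) * e1 = (e2 * (e1 * a) * e2) * (b * e1)" by (simp add: mult.assoc)
  also have "\<dots> = EM (e1 * a) * e2 * (b * e1)" using e2e[OF ea] by (simp add: mult.assoc)
  finally have "G (e2 * e1 * (a * e2 * b) * e1) = G (EM (e1 * a) * e2 * (b * e1))" by simp
  also have "\<dots> = EM (sc lam (EM (e1 * a) * (b * e1)))" using EM1_gen EMea MM1 be1 by auto
  also have "\<dots> = sc lam (EM (e1 * a) * EM (b * e1))"
    using EM_sc EM_left[OF EMea be1] EMea be1 MM1 M1_cl(3) by (metis subsetD)
  finally show "G (e1 * (a * e2 * b) * e1 * e2) = G (e2 * e1 * (a * e2 * b) * e1)" using L by simp
next
  fix u v assume uv: "u \<in> M2" "v \<in> M2" and h: "G (e1 * u * e1 * e2) = G (e2 * e1 * u * e1)"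
     "G (e1 * v * e1 * e2) = G (e2 * e1 * v * e1)"
  have m: "e1 * w * e1 * e2 \<in> M2" "e2 * e1 * w * e1 \<in> M2" if "w \<in> M2" for w
    using that e1M2 e2M2 M2_cl(3) by meson+
  have "G (e1 * (u + v) * e1 * e2) = G (e1 * u * e1 * e2 + e1 * v * e1 * e2)" by (simp add: algebra_simps)
  also have "\<dots> = G (e1 * u * e1 * e2) + G (e1 * v * e1 * e2)" using m uv G_add by blast
  also have "\<dots> = G (e2 * e1 * u * e1) + G (e2 * e1 * v * e1)" using h by simp
  also have "\<dots> = G (e2 * e1 * u * e1 + e2 * e1 * v * e1)" using m uv G_add by metis
  also have "\<dots> = G (e2 * e1 * (u + v) * e1)" by (simp add: algebra_simps)
  finally show "G (e1 * (u + v) * e1 * e2) = G (e2 * e1 * (u + v) * e1)" .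
qed

abbreviation "BB \<equiv> centralizer M2 M"
abbreviation "CC \<equiv> centralizer M2 N"
abbreviation "AA \<equiv> centralizer M1 N"

lemma BM2: "b \<in> BB \<Longrightarrow> b \<in> M2" unfolding centralizer_def by blast
lemma Bcomm: "b \<in> BB \<Longrightarrow> m \<in> M \<Longrightarrow> b * m = m * b" unfolding centralizer_def by blast
lemma BC: "b \<in> BB \<Longrightarrow> b \<in> CC" using NM unfolding centralizer_def by blast

lemma m2: "u \<in> M2 \<Longrightarrow> v \<in> M2 \<Longrightarrow> u * v \<in> M2" using M2_cl(3) by blast

lemma claimK:
  assumes b: "b \<in> BB" and be: "be \<in> BB" and h: "EM1 (b * e1 * e2) = EM1 (e2 * e1 * be)"
    and w: "w \<in> M1"
  shows "G (w * be * e1 * e2) = G (b * w * e2 * e1)"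
proof (rule induct1[OF w, where P="\<lambda>w. G (w * be * e1 * e2) = G (b * w * e2 * e1)"])
  show "G (0 * be * e1 * e2) = G (b * 0 * e2 * e1)" by simp
next
  fix p r assume pr: "p \<in> M" "r \<in> M"
  have bM2: "b \<in> M2" "be \<in> M2" using b be BM2 by auto
  have pM2: "p \<in> M2" "r \<in> M2" using pr MM2 by auto
  have re1: "r * e1 \<in> M1" using pr MM1 e1M1 M1_cl(3) by blast
  have "p * e1 * r * be * e1 * e2 = p * (e1 * (be * r) * e1 * e2)"
    using Bcomm[OF be pr(2)] by (simp add: mult.assoc)
  then have "G (p * e1 * r * be * e1 * e2) = p * G (e1 * (be * r) * e1 * e2)"
    using G_left pr bM2 pM2 e1M2 e2M2 m2 by metis
  also have "\<dots> = p * G (e2 * e1 * (be * r) * e1)" using swapL bM2 pM2 m2 by metis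
  also have "e2 * e1 * (be * r) * e1 = (e2 * e1 * be) * (r * e1)" by (simp add: mult.assoc)
  also have "EM1 (\<dots>) = EM1 (e2 * e1 * be) * (r * e1)" using EM1_right re1 bM2 e1M2 e2M2 m2 by metis
  also have "\<dots> = EM1 (b * e1 * e2) * (r * e1)" using h by simp
  also have "\<dots> = EM1 (b * e1 * e2 * (r * e1))" using EM1_right re1 bM2 e1M2 e2M2 m2 by metis
  finally have L: "G (p * e1 * r * be * e1 * e2) = p * G (b * e1 * e2 * (r * e1))" .
  have "b * (p * e1 * r) * e2 * e1 = (b * p) * e1 * (r * e2) * e1" by (simp add: mult.assoc)
  also have "\<dots> = (p * b) * e1 * (e2 * r) * e1" using Bcomm[OF b pr(1)] e2c[OF pr(2)] by simp
  also have "\<dots> = p * (b * e1 * e2 * (r * e1))" by (simp add: mult.assoc)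
  finally have "b * (p * e1 * r) * e2 * e1 = p * (b * e1 * e2 * (r * e1))" .
  then have "G (b * (p * e1 * r) * e2 * e1) = p * G (b * e1 * e2 * (r * e1))"
    using G_left pr bM2 re1 M1M2 e1M2 e2M2 m2 by (metis subsetD)
  then show "G (p * e1 * r * be * e1 * e2) = G (b * (p * e1 * r) * e2 * e1)" using L by simp
next
  fix u v assume uv: "u \<in> M1" "v \<in> M1" and hu: "G (u * be * e1 * e2) = G (b * u * e2 * e1)"
    and hv: "G (v * be * e1 * e2) = G (b * v * e2 * e1)"
  have bM2: "b \<in> M2" "be \<in> M2" using b be BM2 by auto
  have m: "w * be * e1 * e2 \<in> M2" "b * w * e2 * e1 \<in> M2" if "w \<in> M1" for w
    using that M1M2 bM2 e1M2 e2M2 m2 by (meson subsetD)+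
  have "G ((u + v) * be * e1 * e2) = G (u * be * e1 * e2 + v * be * e1 * e2)" by (simp add: algebra_simps)
  also have "\<dots> = G (b * u * e2 * e1) + G (b * v * e2 * e1)" using m uv G_add hu hv by metis
  also have "\<dots> = G (b * u * e2 * e1 + b * v * e2 * e1)" using m uv G_add by metis
  also have "\<dots> = G (b * (u + v) * e2 * e1)" by (simp add: algebra_simps)
  finally show "G ((u + v) * be * e1 * e2) = G (b * (u + v) * e2 * e1)" .
qed

lemma mainId:
  assumes b: "b \<in> BB" and c: "c \<in> M2"
  shows "G (c * S (S b)) = G (b * c)"
proof -
  define be where "be = S b"
  define ga where "ga = S be"
  have be: "be \<in> BB" using SB b be_def by blast
  have ga: "ga \<in> BB" using SB be ga_def by blast
  have hb: "EM1 (b * e1 * e2) = EM1 (e2 * e1 * be)" using Sdef b be_def by blast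
  have hbe: "EM1 (be * e1 * e2) = EM1 (e2 * e1 * ga)" using Sdef be ga_def by blast
  have bM2: "b \<in> M2" "be \<in> M2" "ga \<in> M2" using b be ga BM2 by auto
  have inner: "G (u * e2 * v * ga) = G (b * (u * e2 * v))" if u: "u \<in> M1" and v: "v \<in> M1" for u v
  proof (rule induct1[OF v, where P="\<lambda>v. G (u * e2 * v * ga) = G (b * (u * e2 * v))"])
    show "G (u * e2 * 0 * ga) = G (b * (u * e2 * 0))" by simp
  next
    fix s t assume st: "s \<in> M" "t \<in> M"
    have us: "u * s \<in> M1" using u st MM1 M1_cl(3) by blast
    have usM2: "u * s \<in> M2" using us M1M2 by blast
    have tM2: "t \<in> M2" using st MM2 by blast
    have "u * e2 * (s * e1 * t) * ga = u * (e2 * s) * e1 * (t * ga)" by (simp add: mult.assoc)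
    also have "\<dots> = u * (s * e2) * e1 * (ga * t)" using e2c[OF st(1)] Bcomm[OF ga st(2)] by simp
    also have "\<dots> = ((u * s) * (e2 * e1 * ga)) * t" by (simp add: mult.assoc)
    finally have "G (u * e2 * (s * e1 * t) * ga) = G ((u * s) * (e2 * e1 * ga)) * t"
      using G_right st usM2 bM2 e1M2 e2M2 m2 by metis
    also have "EM1 ((u * s) * (e2 * e1 * ga)) = (u * s) * EM1 (e2 * e1 * ga)"
      using EM1_left us bM2 e1M2 e2M2 m2 by metis
    also have "\<dots> = (u * s) * EM1 (be * e1 * e2)" using hbe by simp
    also have "\<dots> = EM1 ((u * s) * be * e1 * e2)"
      using EM1_left us bM2 e1M2 e2M2 m2 by (metis mult.assoc)
    also have "EM (\<dots>) = G (b * (u * s) * e2 * e1)" using claimK[OF b be hb us] .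
    also have "G (b * (u * s) * e2 * e1) * t = G (b * (u * s) * e2 * e1 * t)"
      using G_right st usM2 bM2 e1M2 e2M2 m2 by metis
    also have "b * (u * s) * e2 * e1 * t = b * (u * e2 * (s * e1 * t))"
      using e2c[OF st(1)] by (simp add: mult.assoc)
    finally show "G (u * e2 * (s * e1 * t) * ga) = G (b * (u * e2 * (s * e1 * t)))" .
  next
    fix v1 v2 assume vv: "v1 \<in> M1" "v2 \<in> M1" and h1: "G (u * e2 * v1 * ga) = G (b * (u * e2 * v1))"
      and h2: "G (u * e2 * v2 * ga) = G (b * (u * e2 * v2))"
    have m: "u * e2 * w * ga \<in> M2" "b * (u * e2 * w) \<in> M2" if "w \<in> M1" for w
      using that u M1M2 bM2 e2M2 m2 by (meson subsetD)+
    have "G (u * e2 * (v1 + v2) * ga) = G (u * e2 * v1 * ga + u * e2 * v2 * ga)" by (simp add: algebra_simps)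
    also have "\<dots> = G (b * (u * e2 * v1)) + G (b * (u * e2 * v2))" using m vv G_add h1 h2 by metis
    also have "\<dots> = G (b * (u * e2 * v1) + b * (u * e2 * v2))" using m vv G_add by metis
    also have "\<dots> = G (b * (u * e2 * (v1 + v2)))" by (simp add: algebra_simps)
    finally show "G (u * e2 * (v1 + v2) * ga) = G (b * (u * e2 * (v1 + v2)))" .
  qed
  have "G (c * ga) = G (b * c)"
  proof (rule induct2[OF c, where P="\<lambda>c. G (c * ga) = G (b * c)"])
    show "G (0 * ga) = G (b * 0)" by simp
  next
    fix u v assume "u \<in> M1" "v \<in> M1" then show "G (u * e2 * v * ga) = G (b * (u * e2 * v))" by (rule inner)
  next
    fix c1 c2 assume cc: "c1 \<in> M2" "c2 \<in> M2" and h1: "G (c1 * ga) = G (b * c1)" and h2: "G (c2 * ga) = G (b * c2)"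
    have "G ((c1 + c2) * ga) = G (c1 * ga + c2 * ga)" by (simp add: algebra_simps)
    also have "\<dots> = G (b * c1) + G (b * c2)" using cc bM2 m2 G_add h1 h2 by metis
    also have "\<dots> = G (b * c1 + b * c2)" using cc bM2 m2 G_add by metis
    also have "\<dots> = G (b * (c1 + c2))" by (simp add: algebra_simps)
    finally show "G ((c1 + c2) * ga) = G (b * (c1 + c2))" .
  qed
  then show ?thesis unfolding ga_def be_def .
qed

lemma CM2: "c \<in> CC \<Longrightarrow> c \<in> M2" unfolding centralizer_def by blast

lemma C_diff: "u \<in> CC \<Longrightarrow> v \<in> CC \<Longrightarrow> u - v \<in> CC"
  unfolding centralizer_def using M2_cl(7) by (auto simp: algebra_simps)

lemma qSS: assumes b: "b \<in> BB" shows "q (S (S b)) = b"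
proof -
  have g: "S (S b) \<in> BB" using SB b by blast
  have qg: "q (S (S b)) \<in> CC" using qC BC[OF g] by blast
  have bC: "b \<in> CC" using BC b by blast
  have d: "q (S (S b)) - b \<in> CC" using C_diff qg bC by blast
  have "\<forall>c'\<in>CC. G ((q (S (S b)) - b) * c') = 0"
  proof
    fix c' assume c': "c' \<in> CC"
    have "G ((q (S (S b)) - b) * c') = G (q (S (S b)) * c' - b * c')" by (simp add: algebra_simps)
    also have "\<dots> = G (q (S (S b)) * c') - G (b * c')"
      using G_diff m2 CM2 qg bC c' by metis
    also have "G (q (S (S b)) * c') = G (c' * S (S b))" using qnak BC[OF g] c' by blast
    also have "\<dots> = G (b * c')" using mainId b CM2[OF c'] by blast
    finally show "G ((q (S (S b)) - b) * c') = 0" by simp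
  qed
  then have "q (S (S b)) - b = 0" using Ffaith d by blast
  then show ?thesis by simp
qed

lemma sum_mem: assumes "subalg sc A" "\<And>i. i < k \<Longrightarrow> f i \<in> A" shows "(\<Sum>i<(k::nat). f i) \<in> A"
  using assms(2)
proof (induction k)
  case 0 then show ?case using sub_props(5)[OF assms(1)] by simp
next
  case (Suc k) then show ?case using sub_props(2)[OF assms(1)] by simp
qed

lemma EM_sum: "(\<And>i. i < k \<Longrightarrow> f i \<in> M1) \<Longrightarrow> EM (\<Sum>i<(k::nat). f i) = (\<Sum>i<k. EM (f i))"
proof (induction k)
  case (Suc k)
  have "(\<Sum>i<k. f i) \<in> M1" using sum_mem[OF subM1, of k f] Suc.prems by simp
  then show ?case using Suc EM_add by simp
qed simp

lemma R1: assumes u: "u \<in> M1" shows "(\<Sum>j<n. x j * e1 * EM (e1 * y j * u)) = sc lam u"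
proof (rule induct1[OF u, where P="\<lambda>u. (\<Sum>j<n. x j * e1 * EM (e1 * y j * u)) = sc lam u"])
  show "(\<Sum>j<n. x j * e1 * EM (e1 * y j * 0)) = sc lam 0" by simp
next
  fix p r assume pr: "p \<in> M" "r \<in> M"
  have "x j * e1 * EM (e1 * y j * (p * e1 * r)) = sc lam (x j * E (y j * p) * e1 * r)" if j: "j < n" for j
  proof -
    have yp: "y j * p \<in> M" using xyM[OF j] pr M_cl(3) by blast
    have EyN: "E (y j * p) \<in> N" using EN yp by blast
    have "e1 * y j * (p * e1 * r) = (e1 * (y j * p) * e1) * r" by (simp add: mult.assoc)
    also have "\<dots> = E (y j * p) * e1 * r" using e1e[OF yp] by simp
    finally have "EM (e1 * y j * (p * e1 * r)) = sc lam (E (y j * p) * r)"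
      using EM_gen EyN NM pr by auto
    then have "x j * e1 * EM (e1 * y j * (p * e1 * r)) = sc lam (x j * (e1 * E (y j * p)) * r)"
      by (simp add: mult.assoc)
    also have "\<dots> = sc lam (x j * E (y j * p) * e1 * r)" using e1c[OF EyN] by (simp add: mult.assoc)
    finally show ?thesis .
  qed
  then have "(\<Sum>j<n. x j * e1 * EM (e1 * y j * (p * e1 * r))) = (\<Sum>j<n. sc lam (x j * E (y j * p) * e1 * r))"
    by simp
  also have "\<dots> = sc lam ((\<Sum>j<n. x j * E (y j * p)) * e1 * r)"
    by (simp add: vs.scale_sum_right sum_distrib_right)
  also have "\<dots> = sc lam (p * e1 * r)" using qb2 pr by simp
  finally show "(\<Sum>j<n. x j * e1 * EM (e1 * y j * (p * e1 * r))) = sc lam (p * e1 * r)" .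
next
  fix u v assume uv: "u \<in> M1" "v \<in> M1" and hu: "(\<Sum>j<n. x j * e1 * EM (e1 * y j * u)) = sc lam u"
    and hv: "(\<Sum>j<n. x j * e1 * EM (e1 * y j * v)) = sc lam v"
  have m: "e1 * y j * w \<in> M1" if "w \<in> M1" "j < n" for w j
    using that xyM e1M1 MM1 M1_cl(3) by (meson subsetD)
  have "(\<Sum>j<n. x j * e1 * EM (e1 * y j * (u + v))) =
        (\<Sum>j<n. x j * e1 * EM (e1 * y j * u) + x j * e1 * EM (e1 * y j * v))"
  proof (rule sum.cong[OF refl])
    fix j assume "j \<in> {..<n}"
    then have "EM (e1 * y j * u + e1 * y j * v) = EM (e1 * y j * u) + EM (e1 * y j * v)" using m uv EM_add by simp
    then show "x j * e1 * EM (e1 * y j * (u + v)) = x j * e1 * EM (e1 * y j * u) + x j * e1 * EM (e1 * y j * v)"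
      by (simp add: distrib_left)
  qed
  also have "\<dots> = sc lam (u + v)" using hu hv by (simp add: sum.distrib vs.scale_right_distrib)
  finally show "(\<Sum>j<n. x j * e1 * EM (e1 * y j * (u + v))) = sc lam (u + v)" .
qed

lemma R2: assumes z: "z \<in> M2"
  shows "(\<Sum>j<n. x j * e1 * e2 * EM1 (e2 * e1 * y j * z)) = sc lam (sc lam z)"
proof (rule induct2[OF z, where P="\<lambda>z. (\<Sum>j<n. x j * e1 * e2 * EM1 (e2 * e1 * y j * z)) = sc lam (sc lam z)"])
  show "(\<Sum>j<n. x j * e1 * e2 * EM1 (e2 * e1 * y j * 0)) = sc lam (sc lam 0)" by simp
next
  fix u v assume uv: "u \<in> M1" "v \<in> M1"
  have "x j * e1 * e2 * EM1 (e2 * e1 * y j * (u * e2 * v)) = sc lam (x j * e1 * EM (e1 * y j * u) * e2 * v)"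
    if j: "j < n" for j
  proof -
    have yu: "e1 * y j * u \<in> M1" using xyM[OF j] uv e1M1 MM1 M1_cl(3) by (meson subsetD)
    have Mj: "EM (e1 * y j * u) \<in> M" using EM_M yu by blast
    have "e2 * e1 * y j * (u * e2 * v) = (e2 * (e1 * y j * u) * e2) * v" by (simp add: mult.assoc)
    also have "\<dots> = EM (e1 * y j * u) * e2 * v" using e2e[OF yu] by simp
    finally have "EM1 (e2 * e1 * y j * (u * e2 * v)) = sc lam (EM (e1 * y j * u) * v)"
      using EM1_gen Mj MM1 uv by auto
    then have "x j * e1 * e2 * EM1 (e2 * e1 * y j * (u * e2 * v)) = sc lam (x j * e1 * (e2 * EM (e1 * y j * u)) * v)"
      by (simp add: mult.assoc)
    also have "\<dots> = sc lam (x j * e1 * EM (e1 * y j * u) * e2 * v)" using e2c[OF Mj] by (simp add: mult.assoc)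
    finally show ?thesis .
  qed
  then have "(\<Sum>j<n. x j * e1 * e2 * EM1 (e2 * e1 * y j * (u * e2 * v))) =
      (\<Sum>j<n. sc lam (x j * e1 * EM (e1 * y j * u) * e2 * v))" by simp
  also have "\<dots> = sc lam ((\<Sum>j<n. x j * e1 * EM (e1 * y j * u)) * e2 * v)"
    by (simp add: vs.scale_sum_right sum_distrib_right)
  also have "\<dots> = sc lam (sc lam (u * e2 * v))" using R1 uv by simp
  finally show "(\<Sum>j<n. x j * e1 * e2 * EM1 (e2 * e1 * y j * (u * e2 * v))) = sc lam (sc lam (u * e2 * v))" .
next
  fix u v assume uv: "u \<in> M2" "v \<in> M2" and hu: "(\<Sum>j<n. x j * e1 * e2 * EM1 (e2 * e1 * y j * u)) = sc lam (sc lam u)"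
    and hv: "(\<Sum>j<n. x j * e1 * e2 * EM1 (e2 * e1 * y j * v)) = sc lam (sc lam v)"
  have m: "e2 * e1 * y j * w \<in> M2" if "w \<in> M2" "j < n" for w j
    using that xyM e1M2 e2M2 MM2 m2 by (meson subsetD)
  have "(\<Sum>j<n. x j * e1 * e2 * EM1 (e2 * e1 * y j * (u + v))) =
        (\<Sum>j<n. x j * e1 * e2 * EM1 (e2 * e1 * y j * u) + x j * e1 * e2 * EM1 (e2 * e1 * y j * v))"
  proof (rule sum.cong[OF refl])
    fix j assume "j \<in> {..<n}"
    then have "EM1 (e2 * e1 * y j * u + e2 * e1 * y j * v) = EM1 (e2 * e1 * y j * u) + EM1 (e2 * e1 * y j * v)"
      using m uv EM1_add by simp
    then show "x j * e1 * e2 * EM1 (e2 * e1 * y j * (u + v)) =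
        x j * e1 * e2 * EM1 (e2 * e1 * y j * u) + x j * e1 * e2 * EM1 (e2 * e1 * y j * v)"
      by (simp add: distrib_left)
  qed
  also have "\<dots> = sc lam (sc lam (u + v))" using hu hv by (simp add: sum.distrib vs.scale_right_distrib)
  finally show "(\<Sum>j<n. x j * e1 * e2 * EM1 (e2 * e1 * y j * (u + v))) = sc lam (sc lam (u + v))" .
qed

lemma phi_inj: assumes b1: "b1 \<in> BB" and b2: "b2 \<in> BB" and h: "EM1 (e2 * e1 * b1) = EM1 (e2 * e1 * b2)"
  shows "b1 = b2"
proof -
  have rec: "sc lam (sc lam b) = (\<Sum>j<n. x j * e1 * e2 * (EM1 (e2 * e1 * b) * y j))" if b: "b \<in> BB" for b
  proof -
    have "sc lam (sc lam b) = (\<Sum>j<n. x j * e1 * e2 * EM1 (e2 * e1 * y j * b))" using R2 BM2[OF b] by simp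
    also have "\<dots> = (\<Sum>j<n. x j * e1 * e2 * (EM1 (e2 * e1 * b) * y j))"
    proof (rule sum.cong[OF refl])
      fix j assume "j \<in> {..<n}"
      then have yj: "y j \<in> M" using xyM by blast
      have "e2 * e1 * y j * b = (e2 * e1 * b) * y j" using Bcomm[OF b yj] by (simp add: mult.assoc)
      moreover have "EM1 ((e2 * e1 * b) * y j) = EM1 (e2 * e1 * b) * y j"
        using EM1_right yj MM1 BM2[OF b] e1M2 e2M2 m2 by (meson subsetD)
      ultimately show "x j * e1 * e2 * EM1 (e2 * e1 * y j * b) = x j * e1 * e2 * (EM1 (e2 * e1 * b) * y j)" by simp
    qed
    finally show ?thesis .
  qed
  have "sc lam (sc lam b1) = sc lam (sc lam b2)" using rec[OF b1] rec[OF b2] h by simp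
  then show ?thesis using lam0 by simp
qed

lemma casimir: assumes w: "\<forall>s\<in>N. s * w = w * s" and m: "m \<in> M"
  shows "m * (\<Sum>j<n. x j * w * y j) = (\<Sum>j<n. x j * w * y j) * m"
proof -
  have "m * (\<Sum>j<n. x j * w * y j) = (\<Sum>j<n. (m * x j) * w * y j)" by (simp add: sum_distrib_left mult.assoc)
  also have "\<dots> = (\<Sum>j<n. \<Sum>i<n. x i * w * (E (y i * m * x j) * y j))"
  proof (rule sum.cong[OF refl])
    fix j assume "j \<in> {..<n}"
    then have mx: "m * x j \<in> M" using xyM m M_cl(3) by blast
    have "(m * x j) * w * y j = (\<Sum>i<n. x i * E (y i * (m * x j))) * w * y j" using qb2[OF mx] by simp
    also have "\<dots> = (\<Sum>i<n. x i * (E (y i * (m * x j)) * w) * y j)" by (simp add: sum_distrib_right mult.assoc)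
    also have "\<dots> = (\<Sum>i<n. x i * w * (E (y i * m * x j) * y j))"
    proof (rule sum.cong[OF refl])
      fix i assume "i \<in> {..<n}"
      then have "E (y i * (m * x j)) \<in> N" using xyM mx M_cl(3) EN by blast
      then have "E (y i * (m * x j)) * w = w * E (y i * (m * x j))" using w by blast
      then show "x i * (E (y i * (m * x j)) * w) * y j = x i * w * (E (y i * m * x j) * y j)"
        by (simp add: mult.assoc)
    qed
    finally show "(m * x j) * w * y j = (\<Sum>i<n. x i * w * (E (y i * m * x j) * y j))" .
  qed
  also have "\<dots> = (\<Sum>i<n. \<Sum>j<n. x i * w * (E (y i * m * x j) * y j))" by (rule sum.swap)
  also have "\<dots> = (\<Sum>i<n. x i * w * (y i * m))"
  proof (rule sum.cong[OF refl])
    fix i assume "i \<in> {..<n}"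
    then have ym: "y i * m \<in> M" using xyM m M_cl(3) by blast
    have "(\<Sum>j<n. x i * w * (E (y i * m * x j) * y j)) = x i * w * (\<Sum>j<n. E (y i * m * x j) * y j)"
      by (simp add: sum_distrib_left)
    also have "\<dots> = x i * w * (y i * m)" using qb1[OF ym] by simp
    finally show "(\<Sum>j<n. x i * w * (E (y i * m * x j) * y j)) = x i * w * (y i * m)" .
  qed
  also have "\<dots> = (\<Sum>j<n. x j * w * y j) * m" by (simp add: sum_distrib_right mult.assoc)
  finally show ?thesis .
qed

lemma EMe1: "EM e1 = sc lam 1"
  using EM_gen[OF M_cl(1) M_cl(1)] by simp

lemma Tprops: assumes a: "a \<in> AA"
  shows "(\<Sum>j<n. x j * (a * e2 * e1) * y j) \<in> BB"
    and "EM1 ((\<Sum>j<n. x j * (a * e2 * e1) * y j) * e1 * e2) = sc lam (sc lam a)"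
proof -
  have aM1: "a \<in> M1" and ac: "\<And>s. s \<in> N \<Longrightarrow> a * s = s * a" using a unfolding centralizer_def by auto
  have aM2: "a \<in> M2" using aM1 M1M2 by blast
  let ?T = "(\<Sum>j<n. x j * (a * e2 * e1) * y j)"
  have TM2: "?T \<in> M2"
    by (rule sum_mem[OF subM2]) (use xyM MM2 aM2 e1M2 e2M2 m2 in \<open>meson subsetD\<close>)
  have w: "\<forall>s\<in>N. s * (a * e2 * e1) = (a * e2 * e1) * s"
  proof
    fix s assume s: "s \<in> N"
    have "s * (a * e2 * e1) = (s * a) * e2 * e1" by (simp add: mult.assoc)
    also have "\<dots> = (a * s) * e2 * e1" using ac[OF s] by simp
    also have "\<dots> = a * (s * e2) * e1" by (simp add: mult.assoc)
    also have "\<dots> = a * (e2 * s) * e1" using e2c s NM by (metis subsetD)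
    also have "\<dots> = a * e2 * (s * e1)" by (simp add: mult.assoc)
    also have "\<dots> = (a * e2 * e1) * s" using e1c[OF s] by (simp add: mult.assoc)
    finally show "s * (a * e2 * e1) = (a * e2 * e1) * s" .
  qed
  show "?T \<in> BB" unfolding centralizer_def using TM2 casimir[OF w] by auto
  have "?T * e1 * e2 = (\<Sum>j<n. sc lam (x j * E (y j) * a * e2))"
    unfolding sum_distrib_right
  proof (rule sum.cong[OF refl])
    fix j assume "j \<in> {..<n}"
    then have yj: "y j \<in> M" using xyM by blast
    have EyN: "E (y j) \<in> N" using EN yj by blast
    have "x j * (a * e2 * e1) * y j * e1 * e2 = x j * a * e2 * (e1 * y j * e1) * e2" by (simp add: mult.assoc)
    also have "\<dots> = x j * a * (e2 * E (y j)) * e1 * e2" using e1e[OF yj] by (simp add: mult.assoc)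
    also have "\<dots> = x j * a * (E (y j) * e2) * e1 * e2" using e2c EyN NM by (metis subsetD)
    also have "\<dots> = x j * (a * E (y j)) * (e2 * e1 * e2)" by (simp add: mult.assoc)
    also have "e2 * e1 * e2 = sc lam 1 * e2" using e2e[OF e1M1] EMe1 by simp
    also have "x j * (a * E (y j)) * (sc lam 1 * e2) = sc lam (x j * E (y j) * a * e2)"
      using ac[OF EyN] by (simp add: mult.assoc)
    finally show "x j * (a * e2 * e1) * y j * e1 * e2 = sc lam (x j * E (y j) * a * e2)" .
  qed
  also have "\<dots> = sc lam ((\<Sum>j<n. x j * E (y j)) * a * e2)"
    by (simp add: vs.scale_sum_right sum_distrib_right)
  also have "(\<Sum>j<n. x j * E (y j)) = 1" using qb2[OF M_cl(1)] by simp
  finally have "?T * e1 * e2 = sc lam (a * e2 * 1)" by simp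
  then show "EM1 (?T * e1 * e2) = sc lam (sc lam a)"
    using EM1_sc EM1_gen[OF aM1 M1_cl(1)] aM1 e2M2 M1M2 m2 by (metis subsetD mult_1_right gen2 M1_cl(1))
qed

lemma S_surj: assumes be: "be \<in> BB" shows "\<exists>b\<in>BB. S b = be"
proof -
  define a where "a = EM1 (e2 * e1 * be)"
  have X: "e2 * e1 * be \<in> M2" using BM2[OF be] e1M2 e2M2 m2 by blast
  have aA: "a \<in> AA" unfolding centralizer_def
  proof (intro CollectI conjI ballI)
    show "a \<in> M1" unfolding a_def using EM1_M1 X by blast
    fix s assume s: "s \<in> N"
    have sM: "s \<in> M" and sM1: "s \<in> M1" using s NM NM1 by auto
    have "s * (e2 * e1 * be) = (s * e2) * e1 * be" by (simp add: mult.assoc)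
    also have "\<dots> = e2 * (s * e1) * be" using e2c[OF sM] by (simp add: mult.assoc)
    also have "\<dots> = e2 * e1 * (s * be)" using e1c[OF s] by (simp add: mult.assoc)
    also have "\<dots> = (e2 * e1 * be) * s" using Bcomm[OF be sM] by (simp add: mult.assoc)
    finally have "s * (e2 * e1 * be) = (e2 * e1 * be) * s" .
    then show "a * s = s * a" unfolding a_def using EM1_left[OF sM1 X] EM1_right[OF sM1 X] by simp
  qed
  let ?T = "(\<Sum>j<n. x j * (a * e2 * e1) * y j)"
  define c where "c = inverse lam * inverse lam"
  define b where "b = sc c ?T"
  have TB: "?T \<in> BB" and Tpsi: "EM1 (?T * e1 * e2) = sc lam (sc lam a)" using Tprops[OF aA] by auto
  have TM2: "?T \<in> M2" using BM2[OF TB] .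
  have bB: "b \<in> BB" unfolding centralizer_def b_def
  proof (intro CollectI conjI ballI)
    show "sc c ?T \<in> M2" using M2_cl(4) TM2 by blast
    fix m assume "m \<in> M"
    then have "?T * m = m * ?T" using Bcomm[OF TB] by blast
    then show "sc c ?T * m = m * sc c ?T" by simp
  qed
  have "EM1 (b * e1 * e2) = EM1 (sc c (?T * e1 * e2))" unfolding b_def by simp
  also have "\<dots> = sc c (EM1 (?T * e1 * e2))" using EM1_sc[of "?T * e1 * e2" c] TM2 e1M2 e2M2 m2 by blast
  also have "\<dots> = a" using Tpsi lam0 unfolding c_def by (simp add: field_simps)
  finally have "EM1 (b * e1 * e2) = a" .
  moreover have "EM1 (b * e1 * e2) = EM1 (e2 * e1 * S b)" using Sdef bB by blast
  ultimately have "EM1 (e2 * e1 * S b) = EM1 (e2 * e1 * be)" unfolding a_def by simp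
  then have "S b = be" using phi_inj SB bB be by blast
  then show ?thesis using bB by blast
qed

lemma final: "bij_betw q BB BB \<and> (\<forall>b\<in>BB. S (S b) = the_inv_into BB q b)"
proof -
  have SS: "\<exists>d\<in>BB. b = S (S d)" if bB: "b \<in> BB" for b
  proof -
    obtain c where c: "c \<in> BB" "S c = b" using S_surj[OF bB] by blast
    obtain d where d: "d \<in> BB" "S d = c" using S_surj[OF c(1)] by blast
    show ?thesis using c d by blast
  qed
  have inj: "inj_on q BB"
  proof (rule inj_onI)
    fix b1 b2 assume b: "b1 \<in> BB" "b2 \<in> BB" "q b1 = q b2"
    obtain d1 where d1: "d1 \<in> BB" "b1 = S (S d1)" using SS b(1) by blast
    obtain d2 where d2: "d2 \<in> BB" "b2 = S (S d2)" using SS b(2) by blast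
    have "d1 = q b1" using qSS[OF d1(1)] d1(2) by simp
    moreover have "d2 = q b2" using qSS[OF d2(1)] d2(2) by simp
    ultimately have "d1 = d2" using b(3) by simp
    then show "b1 = b2" using d1 d2 by simp
  qed
  have img: "q ` BB = BB"
  proof
    show "q ` BB \<subseteq> BB"
    proof
      fix z assume "z \<in> q ` BB"
      then obtain b where b: "b \<in> BB" "z = q b" by blast
      obtain d where d: "d \<in> BB" "b = S (S d)" using SS b(1) by blast
      show "z \<in> BB" using b d qSS by simp
    qed
    show "BB \<subseteq> q ` BB"
    proof
      fix b assume b: "b \<in> BB"
      have "S (S b) \<in> BB" using SB b by blast
      then show "b \<in> q ` BB" using qSS[OF b] by (metis image_eqI)
    qed
  qed
  have bij: "bij_betw q BB BB" using inj img unfolding bij_betw_def by blast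
  have "\<forall>b\<in>BB. S (S b) = the_inv_into BB q b"
  proof
    fix b assume b: "b \<in> BB"
    have "S (S b) \<in> BB" using SB b by blast
    then show "S (S b) = the_inv_into BB q b" using the_inv_into_f_eq[OF inj qSS[OF b]] by simp
  qed
  then show ?thesis using bij by blast
qed

end
theorem proposition4p10:
  fixes sc :: "'k::field \<Rightarrow> 'a::ring_1 \<Rightarrow> 'a"
    and N M M1 M2 :: "'a set"
    and E EM EM1 q S :: "'a \<Rightarrow> 'a"
    and lam :: 'k and n :: nat and x y :: "nat \<Rightarrow> 'a" and e1 e2 :: 'a
  assumes alg: "kalg sc"
    and subN: "subalg sc N" and subM: "subalg sc M" and NM: "N \<subseteq> M"
    and irred: "centralizer M N = range (\<lambda>c. sc c 1)"
    and sep: "strongly_sep_data sc N M E lam n x y"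
    and bc1: "basic_construction sc N M E lam M1 e1 EM"
    and bc2: "basic_construction sc M M1 EM lam M2 e2 EM1"
    and d2a: "free_right_with_basis_in M1 M (centralizer M1 N)"
    and d2b: "free_right_with_basis_in M2 M1 (centralizer M2 M)"
    and Fk: "\<forall>c\<in>centralizer M2 N. EM (EM1 c) \<in> range (\<lambda>t. sc t 1)"
    and Ffaith: "\<forall>c\<in>centralizer M2 N.
                   (\<forall>c'\<in>centralizer M2 N. EM (EM1 (c * c')) = 0) \<longrightarrow> c = 0"
    and qC: "\<forall>c\<in>centralizer M2 N. q c \<in> centralizer M2 N"
    and qnak: "\<forall>c\<in>centralizer M2 N. \<forall>c'\<in>centralizer M2 N.
                 EM (EM1 (q c * c')) = EM (EM1 (c' * c))"
    and SB: "\<forall>b\<in>centralizer M2 M. S b \<in> centralizer M2 M"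
    and Sdef: "\<forall>b\<in>centralizer M2 M. EM1 (b * e1 * e2) = EM1 (e2 * e1 * S b)"
  shows "bij_betw q (centralizer M2 M) (centralizer M2 M) \<and>
         (\<forall>b\<in>centralizer M2 M. S (S b) = the_inv_into (centralizer M2 M) q b)"
proof -
  interpret P4ctx sc N M M1 M2 E EM EM1 q S lam n x y e1 e2
    by (rule P4ctx.intro) (fact alg subM NM sep bc1 bc2 Ffaith qC qnak SB Sdef)+
  show ?thesis by (rule final)
qed

end
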